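(* Let $0<q<1$. Then \[ q^{2}(1+q)^{2}+q^{4}+\sum_{n=1}^{\infty}\frac{(1/2|q^{2})_{n}^{2}}{([n+1]_{q^{2}}!)^{2}}\,q^{4n+4}=\frac{(1+q)^{4}}{\pi_{q}}\,q^{9/4}. \]
   Context: Let $0<q<1$ and write $q^{x}=e^{x\log q}$. $[z]_{q^2}=\frac{1-q^{2z}}{1-q^2}$; $[0]_{q^2}!=1$, $[n]_{q^2}!=\prod_{k=1}^n[k]_{q^2}$; $(1/2|q^2)_n=\prod_{k=0}^{n-1}[1/2+k]_{q^2}$. With $(z;q)_\infty=\prod_{k\ge0}(1-zq^k)$, $\pi_q=(1-q^2)q^{1/4}\frac{(q^2;q^2)_\infty^2}{(q;q^2)_\infty^2}$. *)

theory Defs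
  imports "HOL-Analysis.Analysis"
begin

definition qnum2 :: "real \<Rightarrow> real \<Rightarrow> real" where
  "qnum2 q z = (1 - q powr (2 * z)) / (1 - q\<^sup>2)"

definition qfact2 :: "real \<Rightarrow> nat \<Rightarrow> real" where
  "qfact2 q n = (\<Prod>k=1..n. qnum2 q (real k))"

definition qpoch_half :: "real \<Rightarrow> nat \<Rightarrow> real" where
  "qpoch_half q n = (\<Prod>k<n. qnum2 q (1/2 + real k))"

definition qpoch_inf :: "real \<Rightarrow> real \<Rightarrow> real" where
  "qpoch_inf z q = (\<Prod>k. 1 - z * q ^ k)"

definition pi_q :: "real \<Rightarrow> real" where
  "pi_q q = (1 - q\<^sup>2) * q powr (1/4) * (qpoch_inf (q\<^sup>2) (q\<^sup>2))\<^sup>2 / (qpoch_inf q (q\<^sup>2))\<^sup>2"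

end

theory Submission
  imports Defs
begin

definition dd :: "real \<Rightarrow> nat \<Rightarrow> real" where
  "dd q n = 1 - q^(2*n)/q"

definition AA :: "real \<Rightarrow> real \<Rightarrow> nat \<Rightarrow> real" where
  "AA q c n = (\<Prod>j<n. (dd q j)^2 * (c*q^2) / ((1 - (q^2)^(Suc j)) * (1 - c*(q^2)^j)))"

lemma AA_0[simp]: "AA q c 0 = 1" by (simp add: AA_def)

lemma AA_Suc: "AA q c (Suc n) = AA q c n * ((dd q n)^2 * (c*q^2) / ((1 - (q^2)^(Suc n)) * (1 - c*(q^2)^n)))"
  by (simp add: AA_def)

lemma pow_lt1: "0 < (x::real) \<Longrightarrow> x < 1 \<Longrightarrow> 0 < n \<Longrightarrow> x^n < 1"
  by (simp add: power_less_one_iff)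

lemma AA_shift_alg0:
  fixes A D c p y d1 d2 d3 :: real
  assumes "d1 \<noteq> 0" "d2 \<noteq> 0" "d3 \<noteq> 0"
  shows "A*(1-c)*y/d1 * (D^2*(c*p*p)/(d2*d3)) * d3
       = A*(D^2*(c*p)/(d2*d1))*(1-c)*(p*y)"
  using assms by (simp add: field_simps)

lemma AA_shift_alg:
  fixes A D c p y :: real
  assumes "1-c*y \<noteq> 0" "1-p*y \<noteq> 0" "1-c*(p*y) \<noteq> 0"
  shows "A*(1-c)*y/(1-c*y) * (D^2*(c*p*p)/((1-p*y)*(1-c*(p*y)))) * (1-c*(p*y))
       = A*(D^2*(c*p)/((1-p*y)*(1-c*y)))*(1-c)*(p*y)"
  using AA_shift_alg0[OF assms] by simp

lemma AA_shift:
  assumes q: "0 < q" "q < 1" and c: "0 < c" "c < 1"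
  shows "AA q (c*q^2) n * (1 - c*(q^2)^n) = AA q c n * (1-c) * (q^2)^n"
proof (induction n)
  case 0 then show ?case by simp
next
  case (Suc n)
  have p: "0 < q^2" "q^2 < 1" using q by (auto simp: power_less_one_iff)
  have a: "(q^2)^n \<le> 1" "(q^2)^Suc n < 1" using p
    by (simp add: power_le_one) (rule pow_lt1[OF p], simp)
  have "c*(q^2)^n \<le> c" using c a by (simp add: mult_left_le)
  then have b1: "1 - c*(q^2)^n \<noteq> 0" using c by linarith
  have b2: "1 - (q^2)^Suc n \<noteq> 0" using a by simp
  have "c*(q^2)^Suc n \<le> c" using c a by (simp add: mult_left_le del: power_Suc)
  then have b3: "1 - c*q^2*(q^2)^n \<noteq> 0" using c by (simp only: power_Suc mult.assoc)
  have b4: "1 - c*(q^2*(q^2)^n) \<noteq> 0" using b3 by (simp add: mult.assoc)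
  have IH: "AA q (c*q^2) n = AA q c n * (1-c) * (q^2)^n / (1 - c*(q^2)^n)"
    using Suc b1 by (simp add: field_simps)
  have b2': "1 - q^2*(q^2)^n \<noteq> 0" using b2 by simp
  show ?case unfolding AA_Suc IH power_Suc[of "q^2"]
    using AA_shift_alg[OF b1 b2' b4, of "AA q c n" "dd q n"] by (simp add: mult.assoc)
qed

lemma core_alg:
  fixes q c y :: real
  assumes "q \<noteq> 0" "1 - c*y \<noteq> 0"
  shows "(1-c*q^2) - (1-c*q)^2 * y/(1-c*y) = (1-y) - (1-y/q)^2*c*q^2/(1-c*y)"
  using assms by (simp add: field_simps) algebra

lemma tele_alg0:
  fixes A c q y d1 d2 :: real
  assumes "q \<noteq> 0" "d1 \<noteq> 0" "d2 \<noteq> 0"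
    and core: "(1-c*q^2) - (1-c*q)^2 * y/d1 = (1-y) - (1-y/q)^2*c*q^2/d1"
  shows "(1-c)*(1-c*q^2)*A - (1-c*q)^2*(A*(1-c)*y/d1)
       = (1-c)*((1-y)*A - d2*(A*((1-y/q)^2*(c*q^2)/(d2*d1))))"
proof -
  have e1: "(1-c)*(1-c*q^2)*A - (1-c*q)^2*(A*(1-c)*y/d1)
      = (1-c)*A*((1-c*q^2) - (1-c*q)^2 * y/d1)"
    using assms(1-3) by (simp add: field_simps)
  have e2: "(1-c)*((1-y)*A - d2*(A*((1-y/q)^2*(c*q^2)/(d2*d1))))
      = (1-c)*A*((1-y) - (1-y/q)^2*c*q^2/d1)"
    using assms(1-3) by (simp add: field_simps)
  show ?thesis unfolding e1 e2 core ..
qed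

lemma tele_alg:
  fixes A c q y :: real
  assumes "q \<noteq> 0" "1-c*y \<noteq> 0" "1-q^2*y \<noteq> 0"
  shows "(1-c)*(1-c*q^2)*A - (1-c*q)^2*(A*(1-c)*y/(1-c*y))
       = (1-c)*((1-y)*A - (1-q^2*y)*(A*((1-y/q)^2*(c*q^2)/((1-q^2*y)*(1-c*y)))))"
  by (rule tele_alg0[OF assms core_alg[OF assms(1,2)]])

lemma AA_tele_step:
  assumes q: "0 < q" "q < 1" and c: "0 < c" "c < 1"
  shows "(1-c)*(1-c*q^2)*AA q c n - (1-c*q)^2*AA q (c*q^2) n
       = (1-c)*((1-(q^2)^n)*AA q c n - (1-(q^2)^Suc n)*AA q c (Suc n))"
proof -
  have p: "0 < q^2" "q^2 < 1" using q by (auto simp: power_less_one_iff)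
  have a: "(q^2)^n \<le> 1" "(q^2)^Suc n < 1" using p
    by (simp add: power_le_one) (rule pow_lt1[OF p], simp)
  have "c*(q^2)^n \<le> c" using c a by (simp add: mult_left_le)
  then have b1: "1 - c*(q^2)^n \<noteq> 0" using c by linarith
  have b2: "1 - q^2*(q^2)^n \<noteq> 0" using a by simp
  have sh: "AA q (c*q^2) n = AA q c n * (1-c) * (q^2)^n / (1 - c*(q^2)^n)"
    using AA_shift[OF q c, of n] b1 by (simp add: field_simps)
  have dq: "dd q n = 1 - (q^2)^n/q" by (simp add: dd_def power_mult)
  show ?thesis unfolding sh AA_Suc dq power_Suc[of "q^2"]
    by (rule tele_alg) (use q b1 b2 in auto)
qed

lemma AA_tele_sum:
  assumes q: "0 < q" "q < 1" and c: "0 < c" "c < 1"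
  shows "(1-c)*(1-c*q^2)*(\<Sum>n<N. AA q c n) - (1-c*q)^2*(\<Sum>n<N. AA q (c*q^2) n)
       = -(1-c)*(1-(q^2)^N)*AA q c N"
proof (induction N)
  case 0 then show ?case by simp
next
  case (Suc N)
  show ?case using Suc AA_tele_step[OF q c, of N] by (simp add: algebra_simps)
qed

lemma AA_summable:
  assumes q: "0 < q" "q < 1" and c: "0 < c" "c < 1"
  shows "summable (AA q c)"
proof -
  have p: "0 < q^2" "q^2 < 1" using q by (auto simp: power_less_one_iff)
  define g where "g n = (dd q n)^2*(c*q^2)/((1-(q^2)^Suc n)*(1-c*(q^2)^n))" for n
  have z: "(\<lambda>n. (q^2)^n) \<longlonglongrightarrow> 0" by (rule LIMSEQ_power_zero) (use p in simp)
  have z2: "(\<lambda>n. (q^2)^Suc n) \<longlonglongrightarrow> 0"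
    using tendsto_mult[OF tendsto_const[of "q^2"] z] by simp
  have dlim: "(\<lambda>n. dd q n) \<longlonglongrightarrow> 1"
  proof -
    have "(\<lambda>n. 1 - (q^2)^n/q) \<longlonglongrightarrow> 1 - 0/q"
      by (intro tendsto_intros z) (use q in simp)
    then show ?thesis by (simp add: dd_def power_mult)
  qed
  have "g \<longlonglongrightarrow> 1^2*(c*q^2)/((1-0)*(1-c*0))"
    unfolding g_def by (intro tendsto_intros dlim z z2) auto
  then have gl: "g \<longlonglongrightarrow> c*q^2" by simp
  define r where "r = (1 + c*q^2)/2"
  have cq0: "c*q^2 < c*1" using c p by (intro mult_strict_left_mono) auto
  have cq: "c*q^2 < 1" using cq0 c by linarith
  have r: "c*q^2 < r" "r < 1" using cq by (auto simp: r_def)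
  have "eventually (\<lambda>n. g n < r) sequentially" using order_tendstoD(2)[OF gl r(1)] .
  then obtain N where N: "\<And>n. n \<ge> N \<Longrightarrow> g n < r" by (auto simp: eventually_sequentially)
  have gpos: "0 \<le> g n" for n
  proof -
    have a: "(q^2)^n \<le> 1" "(q^2)^Suc n < 1" using p
      by (simp add: power_le_one) (rule pow_lt1[OF p], simp)
    have "c*(q^2)^n \<le> c" using c a by (simp add: mult_left_le)
    then have "0 < 1 - c*(q^2)^n" using c by linarith
    moreover have "0 < 1-(q^2)^Suc n" using a by simp
    ultimately show ?thesis unfolding g_def using c p by (intro divide_nonneg_pos mult_nonneg_nonneg) auto
  qed
  show ?thesis
  proof (rule summable_ratio_test[OF r(2)])
    fix n assume "N \<le> n"
    then have "g n \<le> r" using N by (simp add: less_imp_le)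
    have "norm (AA q c (Suc n)) = norm (AA q c n) * g n"
      unfolding AA_Suc g_def[symmetric] using gpos[of n] by (simp add: abs_mult)
    also have "\<dots> \<le> r * norm (AA q c n)"
      using \<open>g n \<le> r\<close> by (simp add: mult.commute mult_right_mono)
    finally show "norm (AA q c (Suc n)) \<le> r * norm (AA q c n)" .
  qed
qed

lemma AA_rec:
  assumes q: "0 < q" "q < 1" and c: "0 < c" "c < 1"
  shows "(1-c)*(1-c*q^2)* suminf (AA q c) = (1-c*q)^2 * suminf (AA q (c*q^2))"
proof -
  have p: "0 < q^2" "q^2 < 1" using q by (auto simp: power_less_one_iff)
  have cq0: "c*q^2 < c*1" using c p by (intro mult_strict_left_mono) auto
  have c2: "0 < c*q^2" "c*q^2 < 1" using c p apply simp using cq0 c by linarith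
  have s1: "summable (AA q c)" by (rule AA_summable[OF q c])
  have s2: "summable (AA q (c*q^2))" by (rule AA_summable[OF q c2])
  have z: "(\<lambda>n. (q^2)^n) \<longlonglongrightarrow> 0" by (rule LIMSEQ_power_zero) (use p in simp)
  have L1: "(\<lambda>N. (1-c)*(1-c*q^2)*(\<Sum>n<N. AA q c n) - (1-c*q)^2*(\<Sum>n<N. AA q (c*q^2) n))
      \<longlonglongrightarrow> (1-c)*(1-c*q^2)* suminf (AA q c) - (1-c*q)^2 * suminf (AA q (c*q^2))"
    by (intro tendsto_intros summable_LIMSEQ s1 s2)
  have L2: "(\<lambda>N. -(1-c)*(1-(q^2)^N)*AA q c N) \<longlonglongrightarrow> -(1-c)*(1-0)*0"
    by (intro tendsto_intros z summable_LIMSEQ_zero s1)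
  have "(1-c)*(1-c*q^2)* suminf (AA q c) - (1-c*q)^2 * suminf (AA q (c*q^2)) = -(1-c)*(1-0)*0"
    using LIMSEQ_unique[OF L1 L2[folded AA_tele_sum[OF q c]]] .
  then show ?thesis by simp
qed

lemma AA_factor_bound:
  assumes q: "0 < q" "q < 1" and c: "0 < c" "c \<le> q^2"
  shows "\<bar>(dd q n)^2*(c*q^2)/((1-(q^2)^Suc n)*(1-c*(q^2)^n))\<bar> \<le> c/(1-q^2)^2"
proof -
  have p: "0 < q^2" "q^2 < 1" using q by (auto simp: power_less_one_iff)
  have t: "0 < q^(2*n)/q" "q^(2*n)/q \<le> 1/q" using q
    by (auto simp: power_le_one divide_right_mono)
  have oq: "1 \<le> 1/q" using q by simp
  have "dd q n \<le> 1/q" "-(1/q) \<le> dd q n" unfolding dd_def using t oq by linarith+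
  then have "\<bar>dd q n\<bar> \<le> 1/q" by linarith
  then have "\<bar>dd q n\<bar>^2 \<le> (1/q)^2"
    by (intro power_mono) auto
  then have "(dd q n)^2 \<le> (1/q)^2" by simp
  then have n1: "(dd q n)^2*(c*q^2) \<le> (1/q)^2*(c*q^2)"
    using c q by (intro mult_right_mono) auto
  have n2: "(1/q)^2*(c*q^2) = c" using q by (simp add: field_simps)
  have a1: "(q^2)^Suc n \<le> q^2" using p by (simp add: power_le_one)
  have a2: "(q^2)^n \<le> 1" using p by (simp add: power_le_one)
  have "c*(q^2)^n \<le> c" using c a2 by (simp add: mult_left_le)
  then have d2: "1-q^2 \<le> 1-c*(q^2)^n" using c by linarith
  have d1: "1-q^2 \<le> 1-(q^2)^Suc n" using a1 by linarith
  have dpos: "0 < 1 - q^2" using p by simp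
  have "(1-q^2)*(1-q^2) \<le> (1-(q^2)^Suc n)*(1-c*(q^2)^n)"
    using mult_mono[OF d1 d2] d1 dpos by linarith
  then have den: "(1-q^2)^2 \<le> (1-(q^2)^Suc n)*(1-c*(q^2)^n)"
    by (simp only: power2_eq_square[of "1-q^2"])
  have den0: "0 < (1-q^2)^2" using dpos by simp
  have nn: "0 \<le> (dd q n)^2*(c*q^2)" using c by simp
  have "\<bar>(dd q n)^2*(c*q^2)/((1-(q^2)^Suc n)*(1-c*(q^2)^n))\<bar>
      = (dd q n)^2*(c*q^2)/((1-(q^2)^Suc n)*(1-c*(q^2)^n))"
  proof -
    have dp: "0 < (1-(q^2)^Suc n)*(1-c*(q^2)^n)" using den den0 by linarith
    show ?thesis by (rule abs_of_nonneg[OF divide_nonneg_pos[OF nn dp]])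
  qed
  also have "\<dots> \<le> c/(1-q^2)^2"
    using n1 n2 den den0 nn by (intro frac_le) auto
  finally show ?thesis .
qed

lemma AA_bound:
  assumes q: "0 < q" "q < 1" and c: "0 < c" "c \<le> q^2"
  shows "\<bar>AA q c n\<bar> \<le> (c/(1-q^2)^2)^n"
proof (induction n)
  case 0 then show ?case by simp
next
  case (Suc n)
  have "\<bar>AA q c (Suc n)\<bar> = \<bar>AA q c n\<bar> * \<bar>(dd q n)^2*(c*q^2)/((1-(q^2)^Suc n)*(1-c*(q^2)^n))\<bar>"
    unfolding AA_Suc by (simp only: abs_mult)
  also have "\<dots> \<le> (c/(1-q^2)^2)^n * (c/(1-q^2)^2)"
    using Suc AA_factor_bound[OF q c, of n] by (intro mult_mono) auto
  finally show ?case by (simp only: power_Suc mult.commute)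
qed

lemma AA_near1:
  assumes q: "0 < q" "q < 1" and c: "0 < c" "c \<le> q^2" and r: "c/(1-q^2)^2 \<le> 1/2"
  shows "\<bar>suminf (AA q c) - 1\<bar> \<le> 2*(c/(1-q^2)^2)"
proof -
  define r where "r = c/(1-q^2)^2"
  have p: "0 < q^2" "q^2 < 1" using q by (auto simp: power_less_one_iff)
  have r0: "0 \<le> r" "r \<le> 1/2" using r c by (auto simp: r_def)
  have c1: "c < 1" using c p by linarith
  have s: "summable (AA q c)" by (rule AA_summable[OF q c(1) c1])
  have e: "suminf (AA q c) - 1 = (\<Sum>n. AA q c (Suc n))"
    using suminf_split_head[OF s] by simp
  have sg: "summable (\<lambda>n. r^Suc n)" using r0 by simp
  have "norm (\<Sum>n. AA q c (Suc n)) \<le> (\<Sum>n. r^Suc n)"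
    by (rule norm_suminf_le[OF _ sg]) (simp only: real_norm_def r_def, rule AA_bound[OF q c])
  also have "(\<Sum>n. r^Suc n) = r * (1/(1-r))"
    using suminf_mult[OF summable_geometric[of r], of r] suminf_geometric[of r] r0 by simp
  also have "\<dots> \<le> 2*r"
  proof -
    have "1 \<le> 2*(1-r)" using r0 by (simp add: algebra_simps)
    then have "1/(1-r) \<le> 2" using r0 by (subst pos_divide_le_eq) auto
    then have "r * (1/(1-r)) \<le> r * 2" using r0 by (intro mult_left_mono) auto
    then show ?thesis by (simp only: mult.commute)
  qed
  finally show ?thesis using e by (simp add: r_def)
qed

lemma AA_lim1:
  assumes q: "0 < q" "q < 1"
  shows "(\<lambda>K. suminf (AA q ((q^2)^Suc K))) \<longlonglongrightarrow> 1"
proof -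
  have p: "0 < q^2" "q^2 < 1" using q by (auto simp: power_less_one_iff)
  define r where "r K = (q^2)^Suc K/(1-q^2)^2" for K
  have z: "(\<lambda>n. (q^2)^n) \<longlonglongrightarrow> 0" by (rule LIMSEQ_power_zero) (use p in simp)
  have "r \<longlonglongrightarrow> (q^2 * 0)/(1-q^2)^2" unfolding r_def power_Suc
    by (intro tendsto_intros z) (use p in simp)
  then have rl: "r \<longlonglongrightarrow> 0" by simp
  then have ev: "eventually (\<lambda>K. r K < 1/2) sequentially" by (rule order_tendstoD) simp
  have "eventually (\<lambda>K. norm (suminf (AA q ((q^2)^Suc K)) - 1) \<le> 2 * r K) sequentially"
  proof (rule eventually_mono[OF ev])
    fix K assume "r K < 1/2"
    have c: "0 < (q^2)^Suc K" "(q^2)^Suc K \<le> q^2" using p by (auto simp: power_le_one)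
    show "norm (suminf (AA q ((q^2)^Suc K)) - 1) \<le> 2 * r K"
      using AA_near1[OF q c] \<open>r K < 1/2\<close> by (simp add: r_def)
  qed
  moreover have "(\<lambda>K. 2 * r K) \<longlonglongrightarrow> 0" using tendsto_mult[OF tendsto_const rl, of 2] by simp
  ultimately have "(\<lambda>K. suminf (AA q ((q^2)^Suc K)) - 1) \<longlonglongrightarrow> 0"
    by (rule Lim_null_comparison)
  then show ?thesis by (rule LIM_zero_cancel)
qed

lemma qpoch_conv:
  fixes z p :: real
  assumes z: "0 \<le> z" and p: "0 < p" "p < 1"
  shows "convergent_prod (\<lambda>k. 1 - z*p^k)"
proof -
  have "summable (\<lambda>k. p^k)" by (rule summable_geometric) (use p in simp)
  from Series.summable_mult[OF this, of z] have "summable (\<lambda>k. z*p^k)" .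
  then have "summable (\<lambda>k. norm ((1 - z*p^k) - 1))" using z p by simp
  then show ?thesis by (intro abs_convergent_prod_imp_convergent_prod summable_imp_abs_convergent_prod)
qed

lemma qpoch_lim:
  assumes z: "0 \<le> z" and p: "0 < p" "p < 1"
  shows "(\<lambda>n. \<Prod>k<n. 1 - z*p^k) \<longlonglongrightarrow> qpoch_inf z p"
  unfolding qpoch_inf_def LIMSEQ_lessThan_iff_atMost
  by (rule convergent_prod_LIMSEQ[OF qpoch_conv[OF assms]])

lemma qpoch_nz:
  assumes z: "0 \<le> z" "z < 1" and p: "0 < p" "p < 1"
  shows "qpoch_inf z p \<noteq> 0"
  unfolding qpoch_inf_def
proof (rule prodinf_nonzero[OF qpoch_conv[OF z(1) p]])
  fix i
  have "p^i \<le> 1" using p by (simp add: power_le_one)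
  then have "z*p^i \<le> z" using z by (simp add: mult_left_le)
  then show "1 - z*p^i \<noteq> 0" using z by linarith
qed

definition RR :: "real \<Rightarrow> nat \<Rightarrow> real" where
  "RR q k = (1 - (q^2)^Suc k * q)^2/((1-(q^2)^Suc k)*(1-(q^2)^Suc k*q^2))"

lemma f_prod:
  assumes q: "0 < q" "q < 1"
  shows "suminf (AA q (q^2)) = (\<Prod>k<K. RR q k) * suminf (AA q ((q^2)^Suc K))"
proof (induction K)
  case 0 then show ?case by simp
next
  case (Suc K)
  have p: "0 < q^2" "q^2 < 1" using q by (auto simp: power_less_one_iff)
  define c where "c = (q^2)^Suc K"
  have c: "0 < c" "c < 1" unfolding c_def using p apply simp by (rule pow_lt1[OF p]) simp
  have c2: "c*q^2 < 1" using c p mult_strict_mono[of c 1 "q^2" 1] by simp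
  have "(1-c)*(1-c*q^2)* suminf (AA q c) = (1-c*q)^2 * suminf (AA q (c*q^2))"
    by (rule AA_rec[OF q c])
  moreover have "(1-c)*(1-c*q^2) \<noteq> 0" using c c2 by simp
  ultimately have A: "suminf (AA q c) = RR q K * suminf (AA q (c*q^2))"
    unfolding RR_def c_def[symmetric] by (simp add: field_simps)
  have B: "c*q^2 = (q^2)^Suc (Suc K)" unfolding c_def by (simp add: mult.commute)
  have eq: "suminf (AA q ((q^2)^Suc K)) = RR q K * suminf (AA q ((q^2)^Suc (Suc K)))"
    using A[unfolded B] unfolding c_def .
  show ?case unfolding prod.lessThan_Suc Suc.IH eq by (simp only: mult.assoc)
qed

lemma prodRR:
  "(\<Prod>k<K. RR q k) = (\<Prod>k<K. 1 - (q^2)^Suc k*q)^2 /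
     ((\<Prod>k<K. 1-(q^2)^Suc k) * (\<Prod>k<K. 1-(q^2)^Suc k*q^2))"
  by (simp add: RR_def prod_dividef prod.distrib power2_eq_square)

lemma limV:
  assumes q: "0 < q" "q < 1"
  shows "(\<lambda>K. \<Prod>k<K. 1-(q^2)^Suc k) \<longlonglongrightarrow> qpoch_inf (q^2) (q^2)"
proof -
  have p: "0 < q^2" "q^2 < 1" using q by (auto simp: power_less_one_iff)
  show ?thesis using qpoch_lim[of "q^2" "q^2"] p by (simp only: power_Suc)
qed

lemma limU:
  assumes q: "0 < q" "q < 1"
  shows "(\<lambda>K. \<Prod>k<K. 1-(q^2)^Suc k*q) \<longlonglongrightarrow> qpoch_inf q (q^2) / (1-q)"
proof -
  have p: "0 < q^2" "q^2 < 1" using q by (auto simp: power_less_one_iff)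
  have "(\<lambda>n. \<Prod>k<Suc n. 1 - q*(q^2)^k) \<longlonglongrightarrow> qpoch_inf q (q^2)"
    by (rule LIMSEQ_Suc[OF qpoch_lim]) (use q p in auto)
  then have "(\<lambda>n. (\<Prod>k<Suc n. 1 - q*(q^2)^k)/(1-q)) \<longlonglongrightarrow> qpoch_inf q (q^2) / (1-q)"
    by (intro tendsto_intros) (use q in auto)
  moreover have "(\<Prod>k<Suc n. 1 - q*(q^2)^k)/(1-q) = (\<Prod>k<n. 1-(q^2)^Suc k*q)" for n
    using q unfolding prod.lessThan_Suc_shift by (simp add: mult.commute)
  ultimately show ?thesis by simp
qed

lemma limW:
  assumes q: "0 < q" "q < 1"
  shows "(\<lambda>K. \<Prod>k<K. 1-(q^2)^Suc k*q^2) \<longlonglongrightarrow> qpoch_inf (q^2) (q^2) / (1-q^2)"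
proof -
  have p: "0 < q^2" "q^2 < 1" using q by (auto simp: power_less_one_iff)
  have "(\<lambda>n. (\<Prod>k<Suc n. 1-(q^2)^Suc k)/(1-q^2)) \<longlonglongrightarrow> qpoch_inf (q^2) (q^2) / (1-q^2)"
    by (intro tendsto_intros LIMSEQ_Suc[OF limV[OF q]]) (use p in auto)
  moreover have "(\<Prod>k<Suc n. 1-(q^2)^Suc k)/(1-q^2) = (\<Prod>k<n. 1-(q^2)^Suc k*q^2)" for n
    using p unfolding prod.lessThan_Suc_shift by (simp add: mult.commute)
  ultimately show ?thesis by simp
qed

lemma f_closed:
  assumes q: "0 < q" "q < 1"
  shows "suminf (AA q (q^2)) = (qpoch_inf q (q^2) / (1-q))^2 /
           (qpoch_inf (q^2) (q^2) * (qpoch_inf (q^2) (q^2) / (1-q^2)))"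
proof -
  have p: "0 < q^2" "q^2 < 1" using q by (auto simp: power_less_one_iff)
  have nz: "qpoch_inf (q^2) (q^2) \<noteq> 0" by (rule qpoch_nz) (use p in auto)
  have L: "(\<lambda>K. (\<Prod>k<K. RR q k) * suminf (AA q ((q^2)^Suc K))) \<longlonglongrightarrow>
      (qpoch_inf q (q^2) / (1-q))^2 / (qpoch_inf (q^2) (q^2) * (qpoch_inf (q^2) (q^2) / (1-q^2))) * 1"
    unfolding prodRR
    by (intro tendsto_intros limU limV limW AA_lim1 q) (use nz p in auto)
  have "(\<lambda>K. (\<Prod>k<K. RR q k) * suminf (AA q ((q^2)^Suc K))) \<longlonglongrightarrow> suminf (AA q (q^2))"
    by (simp only: f_prod[OF q, symmetric]) simp
  from LIMSEQ_unique[OF this L] show ?thesis by simp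
qed

lemma qnum_half:
  assumes "0 < q"
  shows "qnum2 q (1/2 + real k) = (1 - q^(2*k+1))/(1-q^2)"
proof -
  have "2*(1/2 + real k) = real (2*k+1)" by simp
  then show ?thesis unfolding qnum2_def using assms by (simp only: powr_realpow)
qed

lemma qnum_nat:
  assumes "0 < q"
  shows "qnum2 q (real m) = (1 - q^(2*m))/(1-q^2)"
proof -
  have "2*real m = real (2*m)" by simp
  then show ?thesis unfolding qnum2_def using assms by (simp only: powr_realpow)
qed

lemma fac_gen:
  fixes A B D q :: real
  assumes "D \<noteq> 0" "B \<noteq> 0"
  shows "((A/D)/(B/D))^2 * q^4 = A^2*(q^2*q^2)/(B*B)"
  using assms by (simp add: field_simps power2_eq_square) (simp add: power4_eq_xxxx)

lemma fac_eq:
  assumes q: "0 < q" "q < 1"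
  shows "((1 - q^(2*Suc n+1))/(1-q^2) / ((1 - q^(2*(n+3)))/(1-q^2)))^2 * q^4
       = (dd q (Suc (Suc n)))^2*(q^2*q^2)/((1-(q^2)^Suc (Suc (Suc n)))*(1-q^2*(q^2)^Suc (Suc n)))"
proof -
  define X where "X = q^(2*n+3)"
  have X0: "0 < X" "X < 1" unfolding X_def using q by (auto intro: pow_lt1)
  have "2*Suc n+1 = 2*n+3" by simp
  then have e1: "q^(2*Suc n+1) = X" unfolding X_def by (simp only:)
  have "2*(n+3) = (2*n+3)+3" by simp
  then have e2: "q^(2*(n+3)) = X*q^3" unfolding X_def by (simp only: power_add)
  have e3: "(q^2)^Suc (Suc (Suc n)) = X*q^3"
    using e2 by (simp only: power_mult[symmetric] Suc3_eq_add_3 add.commute)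
  have e4: "q^2*(q^2)^Suc (Suc n) = X*q^3"
    using e3 by (simp only: power_Suc[symmetric])
  have "2*Suc (Suc n) = Suc (2*n+3)" by simp
  then have "q^(2*Suc (Suc n)) = X*q" unfolding X_def by (simp only: power_Suc2)
  then have e5: "dd q (Suc (Suc n)) = 1 - X" unfolding dd_def using q by simp
  have "q^3 \<le> 1" using q by (simp add: power_le_one)
  then have "X*q^3 \<le> X" using X0 by (simp add: mult_left_le)
  then have q3: "X*q^3 < 1" using X0 by linarith
  have q2: "q^2 < 1" using q by (simp add: power_less_one_iff)
  show ?thesis unfolding e1 e2 e3 e4 e5
    by (rule fac_gen) (use q3 q2 in auto)
qed

lemma step_gen:
  fixes a x b y Q q :: real
  shows "(a*x)^2/(b*y)^2 * (Q*q^4) = (a^2/b^2*Q) * ((x/y)^2*q^4)"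
  by (simp add: power_mult_distrib power_divide)

lemma t_closed:
  assumes q: "0 < q" "q < 1"
  shows "(qpoch_half q (Suc n))^2 / (qfact2 q (Suc n + 1))^2 * q^(4*Suc n+4)
       = q^2*(1+q)^2*AA q (q^2) (Suc (Suc n))"
proof (induction n)
  case 0
  have q2: "q^2 < 1" using q by (auto simp: power_less_one_iff)
  have q4: "q^4 < 1" using q by (auto simp: power_less_one_iff)
  have h1: "qpoch_half q (Suc 0) = (1-q)/(1-q^2)"
    unfolding qpoch_half_def using qnum_half[OF q(1), of 0] by simp
  have h2: "qfact2 q (Suc 0 + 1) = (1-q^4)/(1-q^2)"
  proof -
    have "qfact2 q (Suc 0 + 1) = qnum2 q (real 1) * qnum2 q (real 2)"
      unfolding qfact2_def by (simp add: numeral_2_eq_2)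
    also have "\<dots> = (1-q^4)/(1-q^2)" unfolding qnum_nat[OF q(1)] using q2 by simp
    finally show ?thesis .
  qed
  have a: "AA q (q^2) (Suc (Suc 0)) = (1-1/q)^2*(q^2*q^2)/((1-q^2)*(1-q^2)) *
      ((1-q)^2*(q^2*q^2)/((1-q^4)*(1-q^4)))"
    unfolding AA_Suc using q by (simp add: dd_def power2_eq_square power4_eq_xxxx mult.assoc)
  define a1 where "a1 = 1 - q"
  define b1 where "b1 = 1 + q"
  define c1 where "c1 = 1 + q^2"
  have e2: "1 - q^2 = a1*b1" unfolding a1_def b1_def by (simp add: algebra_simps power2_eq_square)
  have e4: "1 - q^4 = a1*b1*c1" unfolding a1_def b1_def c1_def by (simp add: algebra_simps power4_eq_xxxx power2_eq_square)
  have e3: "1 - 1/q = -a1/q" unfolding a1_def using q by (simp add: field_simps)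
  have "0 \<le> q^2" by simp
  then have nz: "a1 \<noteq> 0" "b1 \<noteq> 0" "c1 \<noteq> 0" "q \<noteq> 0" unfolding a1_def b1_def c1_def using q
    by linarith+
  show ?case unfolding h1 h2 a e2 e4 e3 a1_def[symmetric] b1_def[symmetric]
    using nz by (simp add: field_simps power2_eq_square power4_eq_xxxx) (simp add: eval_nat_numeral)
next
  case (Suc n)
  have q2: "q^2 < 1" using q by (auto simp: power_less_one_iff)
  have H: "qpoch_half q (Suc (Suc n)) = qpoch_half q (Suc n) * ((1 - q^(2*Suc n+1))/(1-q^2))"
    unfolding qpoch_half_def using qnum_half[OF q(1), of "Suc n"] by simp
  have F: "qfact2 q (Suc (Suc n) + 1) = qfact2 q (Suc n + 1) * ((1 - q^(2*(n+3)))/(1-q^2))"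
  proof -
    have "qfact2 q (Suc (Suc n) + 1) = qfact2 q (Suc n + 1) * qnum2 q (real (n+3))"
      unfolding qfact2_def by (simp add: add.commute)
    then show ?thesis unfolding qnum_nat[OF q(1)] .
  qed
  have E: "q^(4*Suc (Suc n)+4) = q^(4*Suc n+4) * q^4"
  proof -
    have "4*Suc (Suc n)+4 = (4*Suc n+4)+4" by simp
    then show ?thesis by (simp only: power_add)
  qed
  show ?case unfolding H F E step_gen Suc.IH fac_eq[OF q] AA_Suc[of q "q^2" "Suc (Suc n)"]
    by (simp only: mult.assoc)
qed

lemma fin_gen0:
  fixes q a b P1 P2 w :: real
  assumes "q \<noteq> 0" "a \<noteq> 0" "b \<noteq> 0" "P1 \<noteq> 0" "P2 \<noteq> 0" "w \<noteq> 0"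
  shows "q^2*b^2 * ((P1/a)^2/(P2*(P2/(a*b)))) = b^4/((a*b)*w*P2^2/P1^2) * (w*q^2)"
  using assms by (simp add: field_simps power2_eq_square power4_eq_xxxx)

lemma fin_gen:
  fixes q P1 P2 w :: real
  assumes "0 < q" "q < 1" "P1 \<noteq> 0" "P2 \<noteq> 0" "w \<noteq> 0"
  shows "q^2*(1+q)^2 * ((P1/(1-q))^2/(P2*(P2/(1-q^2)))) = (1+q)^4/((1-q^2)*w*P2^2/P1^2) * (w*q^2)"
proof -
  have e: "1-q^2 = (1-q)*(1+q)" by (simp add: algebra_simps power2_eq_square)
  show ?thesis unfolding e by (rule fin_gen0) (use assms in auto)
qed

lemma AA1:
  assumes q: "0 < q" "q < 1"
  shows "q^2*(1+q)^2*AA q (q^2) 1 = q^4"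
proof -
  define a1 where "a1 = 1 - q"
  define b1 where "b1 = 1 + q"
  have e2: "1 - q^2 = a1*b1" unfolding a1_def b1_def by (simp add: algebra_simps power2_eq_square)
  have e3: "1 - 1/q = -a1/q" unfolding a1_def using q by (simp add: field_simps)
  have nz: "a1 \<noteq> 0" "b1 \<noteq> 0" "q \<noteq> 0" unfolding a1_def b1_def using q by linarith+
  have "AA q (q^2) 1 = (1-1/q)^2*(q^2*q^2)/((1-q^2)*(1-q^2))"
    using AA_Suc[of q "q^2" 0] by (simp add: dd_def)
  then show ?thesis unfolding e2 e3 b1_def[symmetric]
    using nz by (simp add: field_simps power2_eq_square power4_eq_xxxx)
qed

theorem mainTheorem8:
  fixes q :: real
  assumes "0 < q" and "q < 1"
  shows "q\<^sup>2 * (1 + q)\<^sup>2 + q ^ 4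
           + (\<Sum>n. (qpoch_half q (Suc n))\<^sup>2 / (qfact2 q (Suc n + 1))\<^sup>2 * q ^ (4 * Suc n + 4))
         = (1 + q) ^ 4 / pi_q q * q powr (9/4)"
proof -
  have q: "0 < q" "q < 1" using assms by auto
  have p: "0 < q^2" "q^2 < 1" using q by (auto simp: power_less_one_iff)
  have s: "summable (AA q (q^2))" by (rule AA_summable[OF q p])
  have s2: "summable (\<lambda>n. AA q (q^2) (n+2))" using summable_ignore_initial_segment[OF s, of 2] .
  have T: "(\<lambda>n. (qpoch_half q (Suc n))\<^sup>2 / (qfact2 q (Suc n + 1))\<^sup>2 * q ^ (4 * Suc n + 4))
      = (\<lambda>n. q^2*(1+q)^2 * AA q (q^2) (n+2))"
    using t_closed[OF q] by (simp add: numeral_2_eq_2)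
  have sum: "(\<Sum>n. q^2*(1+q)^2 * AA q (q^2) (n+2)) = q^2*(1+q)^2 * (\<Sum>n. AA q (q^2) (n+2))"
    by (rule suminf_mult[OF s2])
  have split: "suminf (AA q (q^2)) = (\<Sum>n. AA q (q^2) (n+2)) + (1 + AA q (q^2) 1)"
    using suminf_split_initial_segment[OF s, of 2] by (simp add: numeral_2_eq_2)
  have LHS: "q\<^sup>2 * (1 + q)\<^sup>2 + q ^ 4
           + (\<Sum>n. (qpoch_half q (Suc n))\<^sup>2 / (qfact2 q (Suc n + 1))\<^sup>2 * q ^ (4 * Suc n + 4))
         = q^2*(1+q)^2 * suminf (AA q (q^2))"
    unfolding T sum split using AA1[OF q] by (simp add: algebra_simps)
  have P1: "qpoch_inf q (q^2) \<noteq> 0" by (rule qpoch_nz) (use q p in auto)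
  have P2: "qpoch_inf (q^2) (q^2) \<noteq> 0" by (rule qpoch_nz) (use p in auto)
  have w: "q powr (1/4) \<noteq> 0" using q by simp
  have pw: "q powr (9/4) = q powr (1/4) * q^2"
  proof -
    have "q powr (9/4) = q powr (1/4 + 2)" by simp
    also have "\<dots> = q powr (1/4) * q powr 2" by (rule powr_add)
    also have "q powr 2 = q^2" using q by (simp add: powr_numeral)
    finally show ?thesis by simp
  qed
  show ?thesis unfolding LHS f_closed[OF q] pi_q_def pw
    by (rule fin_gen[OF q P1 P2 w])
qed

end
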